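(* Let $L\subseteq\Sigma^*$ be regular and suppose the finite lattice $\mathrm{LQ}(L)$ has length equal to $|J(\mathrm{LQ}(L))|$ (this holds in particular when $\mathrm{LQ}(L)$ is a boolean algebra or, more generally, a distributive lattice). Then $\mathrm{ns}(L)=\mathrm{nsyn}(L)=|J(\mathrm{LQ}(L))|$, and the canonical residual automaton $N_L$ is a subatomic state-minimal nfa for $L$.
   Context: $\mathrm{LQ}(L)$ is the set of finite unions (including $\emptyset$) of left derivatives $u^{-1}L=\{w:uw\in L\}$, ordered by inclusion. $J(S)$ denotes the join-irreducible elements of a finite lattice $S$ (non-bottom $j$ with $j=\bigvee X\Rightarrow j\in X$). The length of a finite lattice is the maximal $n$ of a chain $s_0<s_1<\cdots<s_n$. The canonical residual automaton $N_L$ is the nfa with states $J(\mathrm{LQ}(L))$, transitions $X\xrightarrow{a}Y$ iff $Y\subseteq a^{-1}X$, initial states those $X\subseteq L$, and final states those $X$ with $\epsilon\in X$. $\mathrm{ns}(L)$ is the least number of states of an nfa (several initial states allowed) accepting $L$. An nfa for $L$ is subatomic if all its states accept languages in the boolean algebra generated by the two-sided derivatives $u^{-1}Lv^{-1}=\{w:uwv\in L\}$; $\mathrm{nsyn}(L)$ is the least number of states of a subatomic nfa for $L$. *)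

theory Defs
  imports Main
begin

text \<open>Languages over a finite alphabet, given by a finite type 'a; Sigma* = UNIV.\<close>

definition lderiv :: "'a list \<Rightarrow> 'a list set \<Rightarrow> 'a list set" where
  "lderiv u L = {w. u @ w \<in> L}"

definition tsderiv :: "'a list \<Rightarrow> 'a list set \<Rightarrow> 'a list \<Rightarrow> 'a list set" where
  "tsderiv u L v = {w. u @ w @ v \<in> L}"

record ('s, 'a) nfa =
  states :: "'s set"
  init   :: "'s set"
  final  :: "'s set"
  trans  :: "('s \<times> 'a \<times> 's) set"

definition nfa_wf :: "('s, 'a) nfa \<Rightarrow> bool" where
  "nfa_wf N \<longleftrightarrow> finite (states N) \<and> init N \<subseteq> states N \<and> final N \<subseteq> states N
      \<and> (\<forall>p a q. (p, a, q) \<in> trans N \<longrightarrow> p \<in> states N \<and> q \<in> states N)"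

fun steps :: "('s, 'a) nfa \<Rightarrow> 's set \<Rightarrow> 'a list \<Rightarrow> 's set" where
  "steps N Q [] = Q"
| "steps N Q (a # w) = steps N {q'. \<exists>q\<in>Q. (q, a, q') \<in> trans N} w"

definition lang_from :: "('s, 'a) nfa \<Rightarrow> 's \<Rightarrow> 'a list set" where
  "lang_from N q = {w. steps N {q} w \<inter> final N \<noteq> {}}"

definition accepts :: "('s, 'a) nfa \<Rightarrow> 'a list set" where
  "accepts N = {w. steps N (init N) w \<inter> final N \<noteq> {}}"

definition regular :: "'a list set \<Rightarrow> bool" where
  "regular L \<longleftrightarrow> (\<exists>N :: (nat, 'a) nfa. nfa_wf N \<and> accepts N = L)"

text \<open>ns(L): least number of states of an nfa accepting L (states coded as naturals,
  which is no restriction since any finite state set can be relabelled).\<close>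
definition ns :: "'a list set \<Rightarrow> nat" where
  "ns L = (LEAST n. \<exists>N :: (nat, 'a) nfa. nfa_wf N \<and> accepts N = L \<and> card (states N) = n)"

inductive_set bool_alg :: "'a list set set \<Rightarrow> 'a list set set" for G where
  gen: "X \<in> G \<Longrightarrow> X \<in> bool_alg G"
| empty: "{} \<in> bool_alg G"
| compl: "X \<in> bool_alg G \<Longrightarrow> - X \<in> bool_alg G"
| union: "X \<in> bool_alg G \<Longrightarrow> Y \<in> bool_alg G \<Longrightarrow> X \<union> Y \<in> bool_alg G"

definition two_sided_derivs :: "'a list set \<Rightarrow> 'a list set set" where
  "two_sided_derivs L = {tsderiv u L v | u v. True}"

definition subatomic :: "'a list set \<Rightarrow> ('s, 'a) nfa \<Rightarrow> bool" where
  "subatomic L N \<longleftrightarrow> nfa_wf N \<and> accepts N = L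
     \<and> (\<forall>q\<in>states N. lang_from N q \<in> bool_alg (two_sided_derivs L))"

definition nsyn :: "'a list set \<Rightarrow> nat" where
  "nsyn L = (LEAST n. \<exists>N :: (nat, 'a) nfa. subatomic L N \<and> card (states N) = n)"

definition LQ :: "'a list set \<Rightarrow> 'a list set set" where
  "LQ L = {\<Union>F | F. finite F \<and> F \<subseteq> {lderiv u L | u. True}}"

text \<open>Join-irreducible elements of LQ(L); the join of a finite family in LQ(L) is its union
  (LQ(L) is closed under finite unions) and the bottom is the empty language.\<close>
definition JLQ :: "'a list set \<Rightarrow> 'a list set set" where
  "JLQ L = {X \<in> LQ L. X \<noteq> {} \<and> (\<forall>Y. Y \<subseteq> LQ L \<longrightarrow> finite Y \<longrightarrow> X = \<Union>Y \<longrightarrow> X \<in> Y)}"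

definition lattice_length :: "'b set set \<Rightarrow> nat" where
  "lattice_length S = Max {n. \<exists>s. (\<forall>i\<le>n. s i \<in> S) \<and> (\<forall>i<n. s i \<subset> s (Suc i))}"

definition canonical_residual :: "'a list set \<Rightarrow> ('a list set, 'a) nfa" where
  "canonical_residual L =
     \<lparr> states = JLQ L,
       init = {X \<in> JLQ L. X \<subseteq> L},
       final = {X \<in> JLQ L. [] \<in> X},
       trans = {(X, a, Y). X \<in> JLQ L \<and> Y \<in> JLQ L \<and> Y \<subseteq> lderiv [a] X} \<rparr>"

end

theory Submission
  imports Defs
begin

lemma steps_append: "steps N Q (u @ w) = steps N (steps N Q u) w"
  by (induction u arbitrary: Q) auto

lemma steps_union: "steps N Q w = (\<Union>q\<in>Q. steps N {q} w)"
proof (induction w arbitrary: Q)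
  case Nil then show ?case by auto
next
  case (Cons a w)
  have "steps N Q (a # w) = (\<Union>q'\<in>{q'. \<exists>q\<in>Q. (q, a, q') \<in> trans N}. steps N {q'} w)"
    by (simp only: steps.simps Cons.IH[of "{q'. \<exists>q\<in>Q. (q, a, q') \<in> trans N}"])
  also have "\<dots> = (\<Union>q\<in>Q. (\<Union>q'\<in>{q'. (q, a, q') \<in> trans N}. steps N {q'} w))" by blast
  also have "\<dots> = (\<Union>q\<in>Q. steps N {q} (a # w))"
  proof (rule SUP_cong[OF refl])
    fix q
    have "steps N {q} (a # w) = steps N {q'. (q, a, q') \<in> trans N} w" by simp
    also have "\<dots> = (\<Union>q'\<in>{q'. (q, a, q') \<in> trans N}. steps N {q'} w)" by (rule Cons.IH)
    finally show "(\<Union>q'\<in>{q'. (q, a, q') \<in> trans N}. steps N {q'} w) = steps N {q} (a # w)" by simp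
  qed
  finally show ?case .
qed

lemma steps_states: "nfa_wf N \<Longrightarrow> Q \<subseteq> states N \<Longrightarrow> steps N Q w \<subseteq> states N"
proof (induction w arbitrary: Q)
  case Nil then show ?case by simp
next
  case (Cons a w)
  have "{q'. \<exists>q\<in>Q. (q, a, q') \<in> trans N} \<subseteq> states N"
    using Cons.prems unfolding nfa_wf_def by blast
  then show ?case using Cons by simp
qed

definition lang_set :: "('s, 'a) nfa \<Rightarrow> 's set \<Rightarrow> 'a list set" where
  "lang_set N S = (\<Union>q\<in>S. lang_from N q)"

lemma lderiv_lang_set:
  assumes "accepts N = L"
  shows "lderiv u L = lang_set N (steps N (init N) u)"
proof -
  have "w \<in> lderiv u L \<longleftrightarrow> w \<in> lang_set N (steps N (init N) u)" for w
  proof -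
    have "w \<in> lderiv u L \<longleftrightarrow> u @ w \<in> accepts N"
      using assms by (simp add: lderiv_def)
    also have "\<dots> \<longleftrightarrow> steps N (steps N (init N) u) w \<inter> final N \<noteq> {}"
      by (simp add: accepts_def steps_append)
    also have "\<dots> \<longleftrightarrow> w \<in> lang_set N (steps N (init N) u)"
      by (subst steps_union) (auto simp: lang_set_def lang_from_def)
    finally show ?thesis .
  qed
  then show ?thesis by blast
qed

lemma LQ_lang_set:
  assumes "nfa_wf N" "accepts N = L" "X \<in> LQ L"
  shows "\<exists>S. S \<subseteq> states N \<and> X = lang_set N S"
proof -
  obtain F where F: "X = \<Union>F" "finite F" "F \<subseteq> {lderiv u L | u. True}"
    using assms(3) unfolding LQ_def by blast
  have "F \<subseteq> {lderiv u L | u. True} \<Longrightarrow> \<exists>S. S \<subseteq> states N \<and> \<Union>F = lang_set N S"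
    using F(2)
  proof (induction F rule: finite_induct)
    case empty then show ?case by (intro exI[of _ "{}"]) (auto simp: lang_set_def)
  next
    case (insert D F)
    then obtain S where S: "S \<subseteq> states N" "\<Union>F = lang_set N S" by auto
    from insert obtain u where u: "D = lderiv u L" by auto
    let ?S = "steps N (init N) u"
    have "?S \<subseteq> states N" using assms(1) by (intro steps_states) (auto simp: nfa_wf_def)
    moreover have "D = lang_set N ?S" using u lderiv_lang_set[OF assms(2)] by simp
    ultimately show ?case using S
      by (intro exI[of _ "S \<union> ?S"]) (auto simp: lang_set_def)
  qed
  then show ?thesis using F by auto
qed

lemma chain_mono:
  fixes s :: "nat \<Rightarrow> 'b set"
  assumes "\<forall>i<n. s i \<subset> s (Suc i)" "j \<le> i" "i \<le> n"
  shows "s j \<subseteq> s i"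
  using assms(2,3)
proof (induction i)
  case 0 then show ?case by simp
next
  case (Suc i)
  show ?case
  proof (cases "j = Suc i")
    case True then show ?thesis by simp
  next
    case False
    then have "s j \<subseteq> s i" using Suc by simp
    moreover have "s i \<subset> s (Suc i)" using assms(1) Suc.prems by simp
    ultimately show ?thesis by blast
  qed
qed

lemma chain_bound:
  assumes "nfa_wf N" "accepts N = L"
    and "\<forall>i\<le>n. s i \<in> LQ L" "\<forall>i<n. s i \<subset> s (Suc i)"
  shows "n \<le> card (states N)"
proof -
  have "\<forall>i\<in>{..n}. \<exists>S. S \<subseteq> states N \<and> s i = lang_set N S"
    using LQ_lang_set[OF assms(1,2)] assms(3) by auto
  then obtain S where S: "\<And>i. i \<le> n \<Longrightarrow> S i \<subseteq> states N \<and> s i = lang_set N (S i)"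
    by (metis atMost_iff)
  define T where "T i = (\<Union>j\<in>{..i}. S j)" for i
  have fin: "finite (states N)" using assms(1) by (simp add: nfa_wf_def)
  have Tsub: "T i \<subseteq> states N" if "i \<le> n" for i
  proof -
    have "S j \<subseteq> states N" if "j \<le> i" for j using S[of j] that \<open>i \<le> n\<close> by simp
    then show ?thesis unfolding T_def by auto
  qed
  have Tlang: "lang_set N (T i) = s i" if "i \<le> n" for i
  proof -
    have "lang_set N (T i) = (\<Union>j\<in>{..i}. lang_set N (S j))"
      unfolding T_def lang_set_def by blast
    also have "\<dots> = (\<Union>j\<in>{..i}. s j)" using S that by auto
    also have "\<dots> = s i" using chain_mono[OF assms(4) _ that] by auto
    finally show ?thesis .
  qed
  have "i \<le> card (T i)" if "i \<le> n" for i
    using that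
  proof (induction i)
    case 0 then show ?case by simp
  next
    case (Suc i)
    have "T i \<subseteq> T (Suc i)" unfolding T_def by (auto simp: le_Suc_eq)
    moreover have "T i \<noteq> T (Suc i)"
    proof
      assume "T i = T (Suc i)"
      then have "s i = s (Suc i)" using Tlang[of i] Tlang[of "Suc i"] Suc.prems by simp
      moreover have "s i \<subset> s (Suc i)" using assms(4) Suc.prems by simp
      ultimately show False by simp
    qed
    ultimately have "T i \<subset> T (Suc i)" by blast
    moreover have "finite (T (Suc i))" using Tsub[OF Suc.prems] fin finite_subset by blast
    ultimately have "card (T i) < card (T (Suc i))" by (rule psubset_card_mono[rotated])
    then show ?case using Suc by simp
  qed
  then have "n \<le> card (T n)" by simp
  also have "\<dots> \<le> card (states N)" using Tsub[of n] fin by (simp add: card_mono)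
  finally show ?thesis .
qed


lemma accepts_lang_set: "accepts N = lang_set N (init N)"
  by (subst accepts_def, subst steps_union) (auto simp: lang_set_def lang_from_def)

lemma derivs_finite:
  assumes "regular L"
  shows "finite {lderiv u L | u. True}"
proof -
  obtain N :: "(nat, 'a) nfa" where N: "nfa_wf N" "accepts N = L"
    using assms unfolding regular_def by blast
  have "{lderiv u L | u. True} \<subseteq> lang_set N ` Pow (states N)"
  proof
    fix X assume "X \<in> {lderiv u L | u. True}"
    then obtain u where u: "X = lderiv u L" by blast
    have "steps N (init N) u \<subseteq> states N" using N(1) by (intro steps_states) (auto simp: nfa_wf_def)
    then show "X \<in> lang_set N ` Pow (states N)" using u lderiv_lang_set[OF N(2)] by blast
  qed
  moreover have "finite (states N)" using N(1) by (simp add: nfa_wf_def)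
  ultimately show ?thesis by (meson finite_Pow_iff finite_imageI finite_subset)
qed

lemma LQ_finite:
  assumes "finite {lderiv u L | u. True}"
  shows "finite (LQ L)"
proof -
  have "LQ L \<subseteq> Union ` Pow {lderiv u L | u. True}" unfolding LQ_def by blast
  then show ?thesis using assms by (meson finite_Pow_iff finite_imageI finite_subset)
qed

lemma L_in_LQ: "L \<in> LQ L"
proof -
  have "L = \<Union>{lderiv [] L}" by (simp add: lderiv_def)
  then show ?thesis unfolding LQ_def by blast
qed

lemma empty_in_LQ: "{} \<in> LQ L"
  unfolding LQ_def by (intro CollectI exI[of _ "{}"]) auto

lemma LQ_lderiv:
  assumes "X \<in> LQ L"
  shows "lderiv [a] X \<in> LQ L"
proof -
  obtain F where F: "X = \<Union>F" "finite F" "F \<subseteq> {lderiv u L | u. True}"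
    using assms unfolding LQ_def by blast
  have "lderiv [a] X = \<Union>(lderiv [a] ` F)" using F(1) by (auto simp: lderiv_def)
  moreover have "lderiv [a] ` F \<subseteq> {lderiv u L | u. True}"
  proof
    fix Y assume "Y \<in> lderiv [a] ` F"
    then obtain u where "Y = lderiv [a] (lderiv u L)" using F(3) by blast
    then have "Y = lderiv (u @ [a]) L" by (auto simp: lderiv_def)
    then show "Y \<in> {lderiv u L | u. True}" by blast
  qed
  ultimately show ?thesis using F(2) unfolding LQ_def by blast
qed

lemma JLQ_decomp:
  assumes fin: "finite (LQ L)"
  shows "X \<in> LQ L \<Longrightarrow> X = \<Union>{Y \<in> JLQ L. Y \<subseteq> X}"
proof (induction "card {Z \<in> LQ L. Z \<subset> X}" arbitrary: X rule: less_induct)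
  case less
  show ?case
  proof (cases "X \<in> JLQ L \<or> X = {}")
    case True then show ?thesis by auto
  next
    case False
    then obtain Y where Y: "Y \<subseteq> LQ L" "finite Y" "X = \<Union>Y" "X \<notin> Y"
      using less.prems unfolding JLQ_def by blast
    have "Z \<subseteq> \<Union>{Y \<in> JLQ L. Y \<subseteq> X}" if "Z \<in> Y" for Z
    proof -
      have ZX: "Z \<subset> X" using Y that by blast
      have sub1: "{W \<in> LQ L. W \<subset> Z} \<subseteq> {W \<in> LQ L. W \<subset> X}"
        using ZX by auto
      have "Z \<in> {W \<in> LQ L. W \<subset> X}" "Z \<notin> {W \<in> LQ L. W \<subset> Z}"
        using ZX Y(1) that by auto
      then have sub: "{W \<in> LQ L. W \<subset> Z} \<subset> {W \<in> LQ L. W \<subset> X}"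
        using sub1 by blast
      have lt: "card {W \<in> LQ L. W \<subset> Z} < card {W \<in> LQ L. W \<subset> X}"
        by (rule psubset_card_mono[OF _ sub]) (use fin in auto)
      have ZL: "Z \<in> LQ L" using Y(1) that by blast
      have "Z = \<Union>{Y \<in> JLQ L. Y \<subseteq> Z}" by (rule less.hyps[OF lt ZL])
      then have "Z \<subseteq> \<Union>{Y \<in> JLQ L. Y \<subseteq> Z}" by simp
      moreover have "\<Union>{Y \<in> JLQ L. Y \<subseteq> Z} \<subseteq> \<Union>{Y \<in> JLQ L. Y \<subseteq> X}" using ZX by auto
      ultimately show ?thesis by (rule subset_trans)
    qed
    then have "\<Union>Y \<subseteq> \<Union>{Y \<in> JLQ L. Y \<subseteq> X}" by (rule Union_least)
    then have "X \<subseteq> \<Union>{Y \<in> JLQ L. Y \<subseteq> X}" using Y(3) by simp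
    moreover have "\<Union>{Y \<in> JLQ L. Y \<subseteq> X} \<subseteq> X" by auto
    ultimately show ?thesis by (rule antisym)
  qed
qed

lemma JLQ_sub: "JLQ L \<subseteq> LQ L" unfolding JLQ_def by blast

lemma cr_wf: "finite (LQ L) \<Longrightarrow> nfa_wf (canonical_residual L)"
  unfolding nfa_wf_def canonical_residual_def using JLQ_sub finite_subset by fastforce

lemma cr_lang_from:
  assumes fin: "finite (LQ L)"
  shows "X \<in> JLQ L \<Longrightarrow> w \<in> lang_from (canonical_residual L) X \<longleftrightarrow> w \<in> X"
proof (induction w arbitrary: X)
  case Nil then show ?case
    by (auto simp: lang_from_def canonical_residual_def)
next
  case (Cons a w)
  let ?N = "canonical_residual L"
  have "a # w \<in> lang_from ?N X \<longleftrightarrow>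
      steps ?N {Y. (X, a, Y) \<in> trans ?N} w \<inter> final ?N \<noteq> {}"
    by (simp add: lang_from_def)
  also have "\<dots> \<longleftrightarrow> (\<exists>Y. (X, a, Y) \<in> trans ?N \<and> w \<in> lang_from ?N Y)"
    by (subst steps_union) (auto simp: lang_from_def)
  also have "\<dots> \<longleftrightarrow> (\<exists>Y \<in> JLQ L. Y \<subseteq> lderiv [a] X \<and> w \<in> Y)"
    using Cons by (auto simp: canonical_residual_def)
  also have "\<dots> \<longleftrightarrow> w \<in> \<Union>{Y \<in> JLQ L. Y \<subseteq> lderiv [a] X}" by blast
  also have "\<dots> \<longleftrightarrow> w \<in> lderiv [a] X"
    using JLQ_decomp[OF fin LQ_lderiv[of X L a]] Cons.prems JLQ_sub by auto
  also have "\<dots> \<longleftrightarrow> a # w \<in> X" by (simp add: lderiv_def)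
  finally show ?case .
qed

lemma cr_lang_from_eq:
  assumes fin: "finite (LQ L)" and X: "X \<in> JLQ L"
  shows "lang_from (canonical_residual L) X = X"
  using cr_lang_from[OF fin X] by (rule set_eqI)

lemma cr_accepts:
  assumes fin: "finite (LQ L)"
  shows "accepts (canonical_residual L) = L"
proof -
  have "accepts (canonical_residual L) = (\<Union>X\<in>{X \<in> JLQ L. X \<subseteq> L}. lang_from (canonical_residual L) X)"
    by (simp add: accepts_lang_set lang_set_def canonical_residual_def)
  also have "\<dots> = (\<Union>X\<in>{X \<in> JLQ L. X \<subseteq> L}. X)"
    by (rule SUP_cong) (simp_all add: cr_lang_from_eq[OF fin])
  also have "\<dots> = \<Union>{X \<in> JLQ L. X \<subseteq> L}" by simp
  also have "\<dots> = L" using JLQ_decomp[OF fin L_in_LQ] by simp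
  finally show ?thesis .
qed

lemma LQ_bool_alg:
  assumes "X \<in> LQ L"
  shows "X \<in> bool_alg (two_sided_derivs L)"
proof -
  obtain F where F: "X = \<Union>F" "finite F" "F \<subseteq> {lderiv u L | u. True}"
    using assms unfolding LQ_def by blast
  have "F \<subseteq> {lderiv u L | u. True} \<Longrightarrow> \<Union>F \<in> bool_alg (two_sided_derivs L)"
    using F(2)
  proof (induction F rule: finite_induct)
    case empty then show ?case by (simp add: bool_alg.empty)
  next
    case (insert D F)
    then obtain u where u: "D = lderiv u L" by auto
    have "D = tsderiv u L []" using u by (simp add: lderiv_def tsderiv_def)
    then have "D \<in> bool_alg (two_sided_derivs L)"
      by (auto intro!: bool_alg.gen simp: two_sided_derivs_def)
    then show ?case using insert by (simp add: bool_alg.union)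
  qed
  then show ?thesis using F by auto
qed

lemma cr_subatomic:
  assumes fin: "finite (LQ L)"
  shows "subatomic L (canonical_residual L)"
proof -
  have "lang_from (canonical_residual L) q \<in> bool_alg (two_sided_derivs L)"
    if "q \<in> states (canonical_residual L)" for q
  proof -
    have q: "q \<in> JLQ L" using that by (simp add: canonical_residual_def)
    then have "q \<in> LQ L" using JLQ_sub by blast
    then show ?thesis using cr_lang_from_eq[OF fin q] LQ_bool_alg by simp
  qed
  then show ?thesis unfolding subatomic_def using cr_wf[OF fin] cr_accepts[OF fin] by blast
qed

definition relabel :: "('s \<Rightarrow> 't) \<Rightarrow> ('s, 'a) nfa \<Rightarrow> ('t, 'a) nfa" where
  "relabel f N = \<lparr> states = f ` states N, init = f ` init N, final = f ` final N,
     trans = (\<lambda>(p, a, q). (f p, a, f q)) ` trans N \<rparr>"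

lemma steps_relabel:
  assumes inj: "inj_on f (states N)" and wf: "nfa_wf N"
  shows "Q \<subseteq> states N \<Longrightarrow> steps (relabel f N) (f ` Q) w = f ` steps N Q w"
proof (induction w arbitrary: Q)
  case Nil then show ?case by simp
next
  case (Cons a w)
  let ?Q' = "{q'. \<exists>q\<in>Q. (q, a, q') \<in> trans N}"
  have sub: "?Q' \<subseteq> states N" using wf Cons.prems unfolding nfa_wf_def by blast
  have "{q'. \<exists>q\<in>f ` Q. (q, a, q') \<in> trans (relabel f N)} = f ` ?Q'"
  proof (rule set_eqI, rule iffI)
    fix x assume "x \<in> {q'. \<exists>q\<in>f ` Q. (q, a, q') \<in> trans (relabel f N)}"
    then obtain q p b r where q: "q \<in> Q" "(p, b, r) \<in> trans N" "(f q, a, x) = (f p, b, f r)"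
      by (auto simp: relabel_def)
    have "p \<in> states N" "r \<in> states N" using wf q(2) unfolding nfa_wf_def by blast+
    then have "p = q" using inj q Cons.prems unfolding inj_on_def by blast
    then show "x \<in> f ` ?Q'" using q by auto
  next
    fix x assume "x \<in> f ` ?Q'"
    then show "x \<in> {q'. \<exists>q\<in>f ` Q. (q, a, q') \<in> trans (relabel f N)}"
      by (force simp: relabel_def)
  qed
  then show ?case using Cons.IH[OF sub] by simp
qed

lemma relabel_lang_from:
  assumes inj: "inj_on f (states N)" and wf: "nfa_wf N" and q: "q \<in> states N"
  shows "lang_from (relabel f N) (f q) = lang_from N q"
proof -
  have "steps (relabel f N) {f q} w = f ` steps N {q} w" for w
    using steps_relabel[OF inj wf, of "{q}" w] q by simp
  moreover have "f ` steps N {q} w \<inter> f ` final N = f ` (steps N {q} w \<inter> final N)" for w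
    using inj_on_image_Int[OF inj, of "steps N {q} w" "final N"] steps_states[OF wf, of "{q}" w] q wf
    by (auto simp: nfa_wf_def)
  ultimately show ?thesis unfolding lang_from_def by (auto simp: relabel_def)
qed

lemma relabel_props:
  assumes inj: "inj_on f (states N)" and wf: "nfa_wf N"
  shows "nfa_wf (relabel f N)" "accepts (relabel f N) = accepts N"
    "card (states (relabel f N)) = card (states N)"
    "\<forall>q\<in>states (relabel f N). \<exists>p\<in>states N. lang_from (relabel f N) q = lang_from N p"
proof -
  show "nfa_wf (relabel f N)" using wf unfolding nfa_wf_def relabel_def by auto
  show "card (states (relabel f N)) = card (states N)"
    using card_image[OF inj] by (simp add: relabel_def)
  show "\<forall>q\<in>states (relabel f N). \<exists>p\<in>states N. lang_from (relabel f N) q = lang_from N p"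
    using relabel_lang_from[OF inj wf] by (auto simp: relabel_def)
  have "init N \<subseteq> states N" using wf by (simp add: nfa_wf_def)
  then have "accepts (relabel f N) = (\<Union>q\<in>init N. lang_from (relabel f N) (f q))"
    by (simp add: accepts_lang_set lang_set_def relabel_def)
  also have "\<dots> = (\<Union>q\<in>init N. lang_from N q)"
    using relabel_lang_from[OF inj wf] \<open>init N \<subseteq> states N\<close> by auto
  also have "\<dots> = accepts N" by (simp add: accepts_lang_set lang_set_def)
  finally show "accepts (relabel f N) = accepts N" .
qed

theorem mainTheorem18:
  fixes L :: "('a::finite) list set"
  assumes "regular L"
    and "lattice_length (LQ L) = card (JLQ L)"
  shows "ns L = card (JLQ L) \<and> nsyn L = card (JLQ L)
         \<and> subatomic L (canonical_residual L)
         \<and> card (states (canonical_residual L)) = ns L"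
proof -
  have fin: "finite (LQ L)" using LQ_finite[OF derivs_finite[OF assms(1)]] .
  obtain N0 :: "(nat, 'a) nfa" where N0: "nfa_wf N0" "accepts N0 = L"
    using assms(1) unfolding regular_def by blast
  define SS where "SS = {n. \<exists>s. (\<forall>i\<le>n. s i \<in> LQ L) \<and> (\<forall>i<n. s i \<subset> s (Suc i))}"
  have "SS \<subseteq> {..card (states N0)}" unfolding SS_def using chain_bound[OF N0] by auto
  then have finSS: "finite SS" using finite_subset by blast
  have "0 \<in> SS" unfolding SS_def using empty_in_LQ by (intro CollectI exI[of _ "\<lambda>_. {}"]) auto
  then have "Max SS \<in> SS" using finSS Max_in by blast
  then have len: "card (JLQ L) \<in> SS" using assms(2) unfolding lattice_length_def SS_def by simp
  have lower: "card (JLQ L) \<le> card (states N)" if "nfa_wf N" "accepts N = L" for N :: "('s, 'a) nfa"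
    using len chain_bound[OF that] unfolding SS_def by blast
  have finJ: "finite (JLQ L)" using fin JLQ_sub finite_subset by blast
  obtain h where h: "bij_betw h (JLQ L) {0..<card (JLQ L)}"
    using ex_bij_betw_finite_nat[OF finJ] by blast
  let ?C = "canonical_residual L"
  let ?M = "relabel h ?C"
  have inj: "inj_on h (states ?C)" using h by (simp add: bij_betw_def canonical_residual_def)
  have sub: "subatomic L ?C" using cr_subatomic[OF fin] .
  note rp = relabel_props[OF inj cr_wf[OF fin]]
  have Msub: "subatomic L ?M"
    using sub rp unfolding subatomic_def by metis
  have Mcard: "card (states ?M) = card (JLQ L)" using rp(3) by (simp add: canonical_residual_def)
  have ns: "ns L = card (JLQ L)"
    unfolding ns_def
  proof (rule Least_equality)
    show "\<exists>N :: (nat, 'a) nfa. nfa_wf N \<and> accepts N = L \<and> card (states N) = card (JLQ L)"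
      using Msub Mcard unfolding subatomic_def by blast
    show "card (JLQ L) \<le> y" if "\<exists>N :: (nat, 'a) nfa. nfa_wf N \<and> accepts N = L \<and> card (states N) = y" for y
      using that lower by blast
  qed
  have nsyn: "nsyn L = card (JLQ L)"
    unfolding nsyn_def
  proof (rule Least_equality)
    show "\<exists>N :: (nat, 'a) nfa. subatomic L N \<and> card (states N) = card (JLQ L)"
      using Msub Mcard by blast
    show "card (JLQ L) \<le> y" if "\<exists>N :: (nat, 'a) nfa. subatomic L N \<and> card (states N) = y" for y
      using that lower unfolding subatomic_def by blast
  qed
  show ?thesis using ns nsyn sub by (simp add: canonical_residual_def)
qed

end
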